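(* Consider equation (E) and assume each $\tau_i$ is non-decreasing. Suppose either $$\limsup_{t\to+\infty}\prod_{j=1}^{m}\Bigg[\prod_{i=1}^{m}\int_{\tau_j(t)}^{t}p_i(s)\exp\Bigg(\int_{\tau_i(s)}^{\tau_i(t)}\sum_{k=1}^{m}p_k(\xi)\exp\bigg(\int_{\tau_k(\xi)}^{\xi}\sum_{l=1}^{m}p_l(u)\,du\bigg)d\xi\Bigg)ds\Bigg]^{1/m}>\frac{1}{m^{m}},$$ or, assuming in addition that $\liminf_{t\to\infty}\int_{\tau_i(t)}^{t}p_i(s)\,ds=\beta_i\in(0,1/e]$ for every $i$ and letting $\lambda_i^{*}$ be the smallest real root of $e^{\beta_i\lambda}=\lambda$, $$\limsup_{\varepsilon\to0+}\Bigg(\limsup_{t\to+\infty}\prod_{j=1}^{m}\bigg(\prod_{i=1}^{m}\int_{\tau_j(t)}^{t}p_i(s)\exp\Big(\int_{\tau_i(s)}^{\tau_i(t)}\sum_{k=1}^{m}(\lambda_k^{*}-\varepsilon)\,p_k(\xi)\,d\xi\Big)ds\bigg)^{1/m}\Bigg)>\frac{1}{m^{m}}.$$ Then all solutions of (E) oscillate.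
   Context: Equation (E) is $x'(t)+\sum_{i=1}^{m}p_i(t)\,x(\tau_i(t))=0$, $t\ge t_0$, where $m\ge1$ is an integer and, for each $i$, $p_i,\tau_i:[t_0,\infty)\to[0,\infty)$ are continuous, $\tau_i(t)\le t$ for $t\ge t_0$, and $\lim_{t\to\infty}\tau_i(t)=\infty$. Let $\tau(t)=\min_i\tau_i(t)$ and $\tau_{(-1)}(t)=\sup\{s:\tau(s)\le t\}$. A solution of (E) is a function $x\in C([T_0,\infty);\mathbb{R})$ for some $T_0\ge t_0$ which is continuously differentiable on $[\tau_{(-1)}(T_0),\infty)$ and satisfies (E) for $t\ge\tau_{(-1)}(T_0)$. A solution is oscillatory if it has arbitrarily large zeros; "all solutions oscillate" means every solution is oscillatory. *)

theory Defs
  imports "HOL-Analysis.Analysis"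
begin

text \<open>Equation (E): x'(t) + sum_{i=1..m} p_i(t) x(tau_i(t)) = 0, indices i in {1..m}.\<close>

definition tau_min :: "nat \<Rightarrow> (nat \<Rightarrow> real \<Rightarrow> real) \<Rightarrow> real \<Rightarrow> real" where
  "tau_min m tau t = Min ((\<lambda>i. tau i t) ` {1..m})"

definition tau_inv :: "nat \<Rightarrow> (nat \<Rightarrow> real \<Rightarrow> real) \<Rightarrow> real \<Rightarrow> real \<Rightarrow> real" where
  "tau_inv m tau t0 T = Sup {s. t0 \<le> s \<and> tau_min m tau s \<le> T}"

definition is_solution ::
  "nat \<Rightarrow> (nat \<Rightarrow> real \<Rightarrow> real) \<Rightarrow> (nat \<Rightarrow> real \<Rightarrow> real) \<Rightarrow> real \<Rightarrow> (real \<Rightarrow> real) \<Rightarrow> bool" where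
  "is_solution m p tau t0 x \<longleftrightarrow>
     (\<exists>T0\<ge>t0. continuous_on {T0..} x \<and>
        (\<exists>x'. continuous_on {tau_inv m tau t0 T0..} x' \<and>
           (\<forall>t\<ge>tau_inv m tau t0 T0.
              (x has_real_derivative x' t) (at t within {tau_inv m tau t0 T0..}) \<and>
              x' t + (\<Sum>i\<in>{1..m}. p i t * x (tau i t)) = 0)))"

definition oscillatory :: "(real \<Rightarrow> real) \<Rightarrow> bool" where
  "oscillatory x \<longleftrightarrow> (\<forall>T. \<exists>t\<ge>T. x t = 0)"

definition A1 :: "nat \<Rightarrow> (nat \<Rightarrow> real \<Rightarrow> real) \<Rightarrow> (nat \<Rightarrow> real \<Rightarrow> real) \<Rightarrow> real \<Rightarrow> real" where
  "A1 m p tau t =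
    (\<Prod>j\<in>{1..m}. (\<Prod>i\<in>{1..m}.
       integral {tau j t..t} (\<lambda>s. p i s *
         exp (integral {tau i s..tau i t} (\<lambda>\<xi>. \<Sum>k\<in>{1..m}. p k \<xi> *
              exp (integral {tau k \<xi>..\<xi>} (\<lambda>u. \<Sum>l\<in>{1..m}. p l u))))))
     powr (1 / real m))"

definition A2 :: "nat \<Rightarrow> (nat \<Rightarrow> real \<Rightarrow> real) \<Rightarrow> (nat \<Rightarrow> real \<Rightarrow> real) \<Rightarrow> (nat \<Rightarrow> real)
                  \<Rightarrow> real \<Rightarrow> real \<Rightarrow> real" where
  "A2 m p tau lam \<epsilon> t =
    (\<Prod>j\<in>{1..m}. (\<Prod>i\<in>{1..m}.
       integral {tau j t..t} (\<lambda>s. p i s *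
         exp (integral {tau i s..tau i t} (\<lambda>\<xi>. \<Sum>k\<in>{1..m}. (lam k - \<epsilon>) * p k \<xi>))))
     powr (1 / real m))"

end

theory Submission imports Defs begin

lemma int_le_nonneg:
  fixes f g :: "real \<Rightarrow> real"
  assumes "(g has_integral I) S" "\<And>x. x \<in> S \<Longrightarrow> 0 \<le> f x" "\<And>x. x \<in> S \<Longrightarrow> f x \<le> g x"
  shows "integral S f \<le> I"
proof (cases "f integrable_on S")
  case True
  then show ?thesis using assms has_integral_le integrable_integral by blast
next
  case False
  then have "integral S f = 0" by (simp add: not_integrable_integral)
  moreover have "0 \<le> I" using assms by (meson has_integral_nonneg order.trans)
  ultimately show ?thesis by simp
qed

lemma int_nonneg':
  fixes f :: "real \<Rightarrow> real"
  assumes "\<And>x. x \<in> S \<Longrightarrow> 0 \<le> f x"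
  shows "0 \<le> integral S f"
  by (metis assms integral_nonneg not_integrable_integral order_refl)

locale possol =
  fixes m :: nat and t0 a T1 :: real and p tau :: "nat \<Rightarrow> real \<Rightarrow> real" and x dx :: "real \<Rightarrow> real"
  assumes m: "m \<ge> 1"
    and p_cont: "\<forall>i\<in>{1..m}. continuous_on {t0..} (p i)"
    and tau_cont: "\<forall>i\<in>{1..m}. continuous_on {t0..} (tau i)"
    and p_nonneg: "\<forall>i\<in>{1..m}. \<forall>t\<ge>t0. p i t \<ge> 0"
    and tau_le: "\<forall>i\<in>{1..m}. \<forall>t\<ge>t0. tau i t \<le> t"
    and tau_lim: "\<forall>i\<in>{1..m}. filterlim (tau i) at_top at_top"
    and tau_mono: "\<forall>i\<in>{1..m}. mono_on {t0..} (tau i)"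
    and deriv: "\<forall>t\<ge>a. (x has_real_derivative dx t) (at t within {a..})"
    and eqn: "\<forall>t\<ge>a. dx t + (\<Sum>i\<in>{1..m}. p i t * x (tau i t)) = 0"
    and pos: "\<forall>t\<ge>T1. x t > 0"
begin

lemma lev_ex: "\<exists>T. T \<ge> c \<and> (\<forall>t\<ge>T. \<forall>i\<in>{1..m}. c \<le> tau i t)"
proof -
  have "eventually (\<lambda>t. \<forall>i\<in>{1..m}. c \<le> tau i t) at_top"
    using tau_lim by (auto intro!: eventually_ball_finite simp: filterlim_at_top)
  then obtain T where "\<forall>t\<ge>T. \<forall>i\<in>{1..m}. c \<le> tau i t" by (auto simp: eventually_at_top_linorder)
  then show ?thesis by (intro exI[of _ "max T c"]) auto
qed

definition lev where "lev c = (SOME T. T \<ge> c \<and> (\<forall>t\<ge>T. \<forall>i\<in>{1..m}. c \<le> tau i t))"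

lemma lev: "lev c \<ge> c" "t \<ge> lev c \<Longrightarrow> i \<in> {1..m} \<Longrightarrow> c \<le> tau i t"
  using someI_ex[OF lev_ex[of c]] unfolding lev_def by auto

definition "b = max (max a T1) t0"
definition "Tb = lev b"
definition "T2 = lev Tb"
definition "T3 = lev T2"

definition w where "w i t = x (tau i t) / x t"
definition h where "h t = (\<Sum>l\<in>{1..m}. p l t * w l t)"

lemma b_ge: "b \<ge> a" "b \<ge> T1" "b \<ge> t0" "Tb \<ge> b" "T2 \<ge> Tb" "T3 \<ge> T2"
  unfolding b_def Tb_def T2_def T3_def using lev by auto

lemma x_cont: "continuous_on {a..} x"
  using deriv by (auto simp: continuous_on_eq_continuous_within intro: DERIV_continuous)

lemma pos_Tb:
  assumes "t \<ge> Tb"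
  shows "x t > 0" "t \<ge> a" "t \<ge> t0" "\<And>i. i\<in>{1..m} \<Longrightarrow> x (tau i t) > 0"
    "\<And>i. i\<in>{1..m} \<Longrightarrow> tau i t \<ge> b" "\<And>i. i\<in>{1..m} \<Longrightarrow> tau i t \<le> t"
  using assms b_ge lev(2)[of b t] pos tau_le unfolding Tb_def by force+

lemma dx_eq: "t \<ge> Tb \<Longrightarrow> dx t / x t = - h t"
proof -
  assume t: "t \<ge> Tb"
  have "dx t = - (\<Sum>i\<in>{1..m}. p i t * x (tau i t))" using eqn pos_Tb[OF t] by (auto simp: algebra_simps)
  then show ?thesis using pos_Tb[OF t]
    by (simp add: h_def w_def sum_divide_distrib[symmetric])
qed

lemma ftc_ln:
  assumes "Tb \<le> c" "c \<le> d"
  shows "(h has_integral (ln (x c) - ln (x d))) {c..d}"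
proof -
  have "((\<lambda>t. ln (x t)) has_vector_derivative (dx s / x s)) (at s within {c..d})" if s: "s \<in> {c..d}" for s
  proof -
    have st: "s \<ge> Tb" using s assms by auto
    have "(x has_real_derivative dx s) (at s within {c..d})"
      using deriv pos_Tb[OF st] DERIV_subset[of x "dx s" s "{a..}" "{c..d}"] assms b_ge by auto
    from DERIV_chain2[OF DERIV_ln_divide[OF pos_Tb(1)[OF st]] this]
    show ?thesis by (simp add: has_real_derivative_iff_has_vector_derivative[symmetric])
  qed
  from fundamental_theorem_of_calculus[OF assms(2) this]
  have "((\<lambda>s. dx s / x s) has_integral ln (x d) - ln (x c)) {c..d}" by simp
  from has_integral_neg[OF this] have "((\<lambda>s. - (dx s / x s)) has_integral ln (x c) - ln (x d)) {c..d}" by simp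
  then show ?thesis
    by (rule has_integral_cong[THEN iffD1, rotated]) (use assms dx_eq in auto)
qed

lemma h_nonneg: "t \<ge> Tb \<Longrightarrow> h t \<ge> 0"
  unfolding h_def
proof (rule sum_nonneg)
  fix l assume t: "t \<ge> Tb" and l: "l \<in> {1..m}"
  have "p l t \<ge> 0" using p_nonneg l pos_Tb(3)[OF t] by auto
  moreover have "w l t > 0" unfolding w_def using pos_Tb[OF t] l by auto
  ultimately show "0 \<le> p l t * w l t" by simp
qed

lemma x_mono: "Tb \<le> c \<Longrightarrow> c \<le> d \<Longrightarrow> x d \<le> x c"
proof -
  assume cd: "Tb \<le> c" "c \<le> d"
  have "0 \<le> ln (x c) - ln (x d)"
    using has_integral_nonneg[OF ftc_ln[OF cd]] h_nonneg cd by auto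
  then show ?thesis using pos_Tb(1)[of c] pos_Tb(1)[of d] cd by auto
qed

lemma tau_T2: "t \<ge> T2 \<Longrightarrow> i \<in> {1..m} \<Longrightarrow> tau i t \<ge> Tb"
  using lev(2)[of Tb t i] unfolding T2_def by auto

lemma tau_T3: "t \<ge> T3 \<Longrightarrow> i \<in> {1..m} \<Longrightarrow> tau i t \<ge> T2"
  using lev(2)[of T2 t i] unfolding T3_def by auto

lemma w_ge1: "t \<ge> T2 \<Longrightarrow> i \<in> {1..m} \<Longrightarrow> w i t \<ge> 1"
proof -
  assume t: "t \<ge> T2" and i: "i \<in> {1..m}"
  have "x t \<le> x (tau i t)"
    using x_mono[OF tau_T2[OF t i]] pos_Tb(6)[of t i] t i b_ge by auto
  then show ?thesis unfolding w_def using pos_Tb(1)[of t] t b_ge by auto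
qed

lemma w_pos: "t \<ge> Tb \<Longrightarrow> i \<in> {1..m} \<Longrightarrow> w i t > 0"
  unfolding w_def using pos_Tb by auto

lemma sum_le_h: "t \<ge> T2 \<Longrightarrow> (\<Sum>l\<in>{1..m}. p l t) \<le> h t"
  unfolding h_def
proof (rule sum_mono)
  fix l assume t: "t \<ge> T2" and l: "l \<in> {1..m}"
  have "t \<ge> t0" using t b_ge by auto
  then have "p l t \<ge> 0" using p_nonneg l by auto
  then show "p l t \<le> p l t * w l t" using w_ge1[OF t l] by (simp add: mult_le_cancel_left1)
qed

lemma ln_w: "t \<ge> T2 \<Longrightarrow> i \<in> {1..m} \<Longrightarrow> (h has_integral ln (w i t)) {tau i t..t}"
proof -
  assume t: "t \<ge> T2" and i: "i \<in> {1..m}"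
  have tt: "t \<ge> Tb" using t b_ge by auto
  have p1: "x (tau i t) > 0" "x t > 0" using pos_Tb[OF tt] i by auto
  have "ln (w i t) = ln (x (tau i t)) - ln (x t)"
    unfolding w_def using p1 by (simp add: ln_div)
  then show ?thesis using ftc_ln[OF tau_T2[OF t i] pos_Tb(6)[OF tt i]] by simp
qed

lemma inner:
  assumes xi: "\<xi> \<ge> T3" and k: "k \<in> {1..m}"
  shows "exp (integral {tau k \<xi>..\<xi>} (\<lambda>u. \<Sum>l\<in>{1..m}. p l u)) \<le> w k \<xi>"
proof -
  have x2: "\<xi> \<ge> T2" using xi b_ge by auto
  have "integral {tau k \<xi>..\<xi>} (\<lambda>u. \<Sum>l\<in>{1..m}. p l u) \<le> ln (w k \<xi>)"
  proof (rule int_le_nonneg[OF ln_w[OF x2 k]])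
    fix u assume u: "u \<in> {tau k \<xi>..\<xi>}"
    then have u2: "u \<ge> T2" using tau_T3[OF xi k] by auto
    then have "u \<ge> t0" using b_ge by auto
    then show "0 \<le> (\<Sum>l\<in>{1..m}. p l u)" using p_nonneg by (auto intro: sum_nonneg)
    show "(\<Sum>l\<in>{1..m}. p l u) \<le> h u" using sum_le_h[OF u2] .
  qed
  then show ?thesis using w_pos[of \<xi> k] x2 b_ge k
    by (metis exp_le_cancel_iff exp_ln order.trans)
qed

lemma cont_pxtau:
  assumes "Tb \<le> c" "i \<in> {1..m}"
  shows "continuous_on {c..d} (\<lambda>s. p i s * x (tau i s))"
proof -
  have sub: "{c..d} \<subseteq> {t0..}" using assms b_ge by auto
  have "continuous_on {t0..} (tau i)" using tau_cont assms by auto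
  then have "continuous_on {c..d} (tau i)" using continuous_on_subset[OF _ sub] by blast
  moreover have "tau i ` {c..d} \<subseteq> {a..}"
  proof
    fix y assume "y \<in> tau i ` {c..d}"
    then obtain s where "s \<in> {c..d}" "y = tau i s" by auto
    then show "y \<in> {a..}" using pos_Tb(5)[of s i] assms b_ge by auto
  qed
  ultimately have "continuous_on {c..d} (\<lambda>s. x (tau i s))"
    using continuous_on_compose2[OF x_cont] by blast
  moreover have "continuous_on {t0..} (p i)" using p_cont assms by auto
  then have "continuous_on {c..d} (p i)" using continuous_on_subset[OF _ sub] by blast
  ultimately show ?thesis by (intro continuous_intros)
qed

lemma cont_x:
  assumes "Tb \<le> c"
  shows "continuous_on {c..d} x"
  using x_cont continuous_on_subset assms b_ge by (smt (verit) atLeastAtMost_iff atLeast_iff subsetI)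


lemma main:
  assumes T: "T \<ge> T2"
    and G: "\<And>i s t. i\<in>{1..m} \<Longrightarrow> T \<le> s \<Longrightarrow> s \<le> t \<Longrightarrow> exp (G i s t) \<le> x (tau i s) / x (tau i t)"
    and t: "t \<ge> lev T"
  shows "(\<Prod>j\<in>{1..m}. (\<Prod>i\<in>{1..m}. integral {tau j t..t} (\<lambda>s. p i s * exp (G i s t))) powr (1 / real m))
         < 1 / real m ^ m"
proof -
  define I where "I = {1..m}"
  have finI: "finite I" and I1: "1 \<in> I" and cardI: "card I = m" using m by (auto simp: I_def)
  have tT: "t \<ge> T" using t lev(1)[of T] by auto
  have tTb: "t \<ge> Tb" using tT T b_ge by auto
  have tj1: "T \<le> tau j t" "tau j t \<le> t" if "j \<in> I" for j
    using lev(2)[OF t] pos_Tb(6)[OF tTb] that by (auto simp: I_def)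
  have tj: "T \<le> tau j t" "tau j t \<le> t" "Tb \<le> tau j t" if "j \<in> I" for j
    using tj1[OF that] T b_ge by auto
  define A where "A i j = integral {tau j t..t} (\<lambda>s. p i s * exp (G i s t))" for i j
  have A_nonneg: "A i j \<ge> 0" if "i \<in> I" "j \<in> I" for i j
    unfolding A_def
  proof (rule int_nonneg')
    fix s assume "s \<in> {tau j t..t}"
    then have "s \<ge> t0" using tj[OF that(2)] T b_ge by auto
    then show "0 \<le> p i s * exp (G i s t)" using p_nonneg that by (auto simp: I_def)
  qed
  define P where "P = (\<Prod>i\<in>I. x (tau i t))"
  have xpos: "x (tau i t) > 0" if "i \<in> I" for i using pos_Tb(4)[OF tTb] that by (auto simp: I_def)
  have Ppos: "P > 0" unfolding P_def using xpos by (auto intro: prod_pos)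
  have key: "(\<Sum>i\<in>I. x (tau i t) * A i j) < x (tau j t)" if j: "j \<in> I" for j
  proof -
    have "(x has_vector_derivative dx s) (at s within {tau j t..t})" if "s \<in> {tau j t..t}" for s
    proof -
      have "s \<ge> a" using that tj[OF j] b_ge by auto
      then have "(x has_real_derivative dx s) (at s within {a..})" using deriv by auto
      then have "(x has_real_derivative dx s) (at s within {tau j t..t})"
        by (rule DERIV_subset) (use tj[OF j] b_ge in auto)
      then show ?thesis by (simp add: has_real_derivative_iff_has_vector_derivative)
    qed
    from fundamental_theorem_of_calculus[OF tj(2)[OF j] this]
    have "(dx has_integral x t - x (tau j t)) {tau j t..t}" .
    from has_integral_neg[OF this]
    have "((\<lambda>s. - dx s) has_integral x (tau j t) - x t) {tau j t..t}" by simp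
    then have HI: "((\<lambda>s. \<Sum>i\<in>I. p i s * x (tau i s)) has_integral x (tau j t) - x t) {tau j t..t}"
    proof (rule has_integral_cong[THEN iffD1, rotated])
      fix s assume "s \<in> {tau j t..t}"
      then have "s \<ge> a" using tj[OF j] b_ge by auto
      then have "dx s + (\<Sum>i\<in>I. p i s * x (tau i s)) = 0" using eqn by (auto simp: I_def)
      then show "- dx s = (\<Sum>i\<in>I. p i s * x (tau i s))" by linarith
    qed
    have integ: "(\<lambda>s. p i s * x (tau i s)) integrable_on {tau j t..t}" if "i \<in> I" for i
      using cont_pxtau[OF tj(3)[OF j], of i] that by (auto simp: I_def intro: integrable_continuous_interval)
    have sumeq: "(\<Sum>i\<in>I. integral {tau j t..t} (\<lambda>s. p i s * x (tau i s))) = x (tau j t) - x t"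
      using integral_sum[OF finI, of "\<lambda>i s. p i s * x (tau i s)", OF integ] integral_unique[OF HI] by simp
    have each: "x (tau i t) * A i j \<le> integral {tau j t..t} (\<lambda>s. p i s * x (tau i s))" if i: "i \<in> I" for i
    proof -
      have "x (tau i t) * A i j = integral {tau j t..t} (\<lambda>s. x (tau i t) * (p i s * exp (G i s t)))"
        unfolding A_def by simp
      also have "\<dots> \<le> integral {tau j t..t} (\<lambda>s. p i s * x (tau i s))"
      proof (rule int_le_nonneg[OF integrable_integral[OF integ[OF i]]])
        fix s assume s: "s \<in> {tau j t..t}"
        then have s0: "s \<ge> t0" "T \<le> s" "s \<le> t" using tj[OF j] T b_ge by auto
        have pp: "p i s \<ge> 0" using p_nonneg i s0 by (auto simp: I_def)
        show "0 \<le> x (tau i t) * (p i s * exp (G i s t))" using xpos[OF i] pp by simp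
        have "exp (G i s t) \<le> x (tau i s) / x (tau i t)" using G[of i s t] i s0 by (auto simp: I_def)
        then have "x (tau i t) * exp (G i s t) \<le> x (tau i s)" using xpos[OF i] by (simp add: field_simps)
        then have "p i s * (x (tau i t) * exp (G i s t)) \<le> p i s * x (tau i s)" using pp by (rule mult_left_mono)
        then show "x (tau i t) * (p i s * exp (G i s t)) \<le> p i s * x (tau i s)" by (simp add: algebra_simps)
      qed
      finally show ?thesis .
    qed
    have "(\<Sum>i\<in>I. x (tau i t) * A i j) \<le> (\<Sum>i\<in>I. integral {tau j t..t} (\<lambda>s. p i s * x (tau i s)))"
      by (rule sum_mono) (rule each)
    then have "(\<Sum>i\<in>I. x (tau i t) * A i j) \<le> x (tau j t) - x t"
      using sumeq by simp
    then show ?thesis using pos_Tb(1)[OF tTb] by simp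
  qed
  define r where "r = 1 / real m"
  define C where "C j = (\<Prod>i\<in>I. A i j) powr r" for j
  have mpos: "real m > 0" using m by simp
  have step: "real m * P powr r * C j < x (tau j t)" if j: "j \<in> I" for j
  proof -
    have ynn: "\<And>i. i \<in> I \<Longrightarrow> 0 \<le> x (tau i t) * A i j" using xpos A_nonneg j
      by (simp add: less_imp_le)
    have "(\<Prod>i\<in>I. x (tau i t) * A i j) powr (1 / card I) \<le> (\<Sum>i\<in>I. x (tau i t) * A i j / card I)"
      using arith_geom_mean[where S=I and x="\<lambda>i. x (tau i t) * A i j"] finI ynn I1 by blast
    then have "(\<Prod>i\<in>I. x (tau i t) * A i j) powr r \<le> (\<Sum>i\<in>I. x (tau i t) * A i j) / real m"
      by (simp add: cardI r_def sum_divide_distrib)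
    moreover have "(\<Prod>i\<in>I. x (tau i t) * A i j) powr r = P powr r * C j"
      unfolding P_def C_def by (simp add: prod.distrib powr_mult)
    ultimately have "real m * (P powr r * C j) \<le> (\<Sum>i\<in>I. x (tau i t) * A i j)"
      using mpos by (simp add: field_simps)
    then show ?thesis using key[OF j] by (simp add: mult.assoc)
  qed
  have "(\<Prod>j\<in>I. real m * P powr r * C j) < (\<Prod>j\<in>I. x (tau j t))"
    by (rule prod_mono_strict[where f="\<lambda>j. real m * P powr r * C j" and g="\<lambda>j. x (tau j t)", OF I1 step[OF I1] finI])
       (use step xpos in \<open>auto simp: C_def less_imp_le\<close>)
  moreover have "(\<Prod>j\<in>I. real m * P powr r * C j) = real m ^ m * (P powr r) ^ m * (\<Prod>j\<in>I. C j)"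
    by (simp add: prod.distrib cardI power_mult_distrib)
  moreover have "(P powr r) ^ m = P"
    using powr_power[of P r m] Ppos mpos by (simp add: r_def)
  ultimately have "real m ^ m * P * (\<Prod>j\<in>I. C j) < P" unfolding P_def by simp
  then have "(\<Prod>j\<in>I. C j) < 1 / real m ^ m" using Ppos mpos
    by (simp add: field_simps)
  then show ?thesis unfolding C_def A_def I_def r_def .
qed

lemma tau_mono': "i \<in> {1..m} \<Longrightarrow> t0 \<le> s \<Longrightarrow> s \<le> t \<Longrightarrow> tau i s \<le> tau i t"
  using tau_mono by (auto simp: mono_on_def)

lemma G_bound:
  assumes T: "T \<ge> T2" and i: "i \<in> {1..m}" and s: "lev T \<le> s" "s \<le> t"
    and gle: "\<And>\<xi>. \<xi> \<ge> T \<Longrightarrow> g \<xi> \<le> h \<xi>"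
    and gint: "g integrable_on {tau i s..tau i t}"
  shows "exp (integral {tau i s..tau i t} g) \<le> x (tau i s) / x (tau i t)"
proof -
  have s1: "tau i s \<ge> T" using lev(2)[OF s(1) i] .
  have s0: "s \<ge> t0" using s lev(1)[of T] T b_ge by auto
  have st: "tau i s \<le> tau i t" using tau_mono'[OF i s0 s(2)] .
  have sb: "Tb \<le> tau i s" using s1 T b_ge by auto
  have "integral {tau i s..tau i t} g \<le> integral {tau i s..tau i t} h"
    by (rule integral_le[OF gint]) (use ftc_ln[OF sb st] s1 gle in auto)
  also have "\<dots> = ln (x (tau i s)) - ln (x (tau i t))" using ftc_ln[OF sb st] by (simp add: integral_unique)
  finally have "exp (integral {tau i s..tau i t} g) \<le> exp (ln (x (tau i s)) - ln (x (tau i t)))" by simp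
  also have "\<dots> = x (tau i s) / x (tau i t)" using pos_Tb(1)[OF sb] pos_Tb(1)[of "tau i t"] sb st
    by (simp add: exp_diff)
  finally show ?thesis .
qed

lemma G_bound':
  assumes T: "T \<ge> T2" and i: "i \<in> {1..m}" and s: "lev T \<le> s" "s \<le> t"
    and gle: "\<And>\<xi>. \<xi> \<ge> T \<Longrightarrow> 0 \<le> g \<xi> \<and> g \<xi> \<le> h \<xi>"
  shows "exp (integral {tau i s..tau i t} g) \<le> x (tau i s) / x (tau i t)"
proof -
  have s1: "tau i s \<ge> T" using lev(2)[OF s(1) i] .
  have s0: "s \<ge> t0" using s lev(1)[of T] T b_ge by auto
  have st: "tau i s \<le> tau i t" using tau_mono'[OF i s0 s(2)] .
  have sb: "Tb \<le> tau i s" using s1 T b_ge by auto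
  have "integral {tau i s..tau i t} g \<le> ln (x (tau i s)) - ln (x (tau i t))"
    by (rule int_le_nonneg[OF ftc_ln[OF sb st]]) (use s1 gle in auto)
  then have "exp (integral {tau i s..tau i t} g) \<le> exp (ln (x (tau i s)) - ln (x (tau i t)))" by simp
  also have "\<dots> = x (tau i s) / x (tau i t)" using pos_Tb(1)[OF sb] pos_Tb(1)[of "tau i t"] sb st
    by (simp add: exp_diff)
  finally show ?thesis .
qed

lemma cond1: "Limsup at_top (\<lambda>t. ereal (A1 m p tau t)) \<le> ereal (1 / real m ^ m)"
proof (rule Limsup_bounded)
  define g where "g \<xi> = (\<Sum>k\<in>{1..m}. p k \<xi> * exp (integral {tau k \<xi>..\<xi>} (\<lambda>u. \<Sum>l\<in>{1..m}. p l u)))" for \<xi>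
  define G where "G i s t = integral {tau i s..tau i t} g" for i s t
  have T: "lev T3 \<ge> T2" using lev(1)[of T3] b_ge by auto
  have gle: "0 \<le> g \<xi> \<and> g \<xi> \<le> h \<xi>" if "\<xi> \<ge> T3" for \<xi>
  proof
    have x0: "\<xi> \<ge> t0" using that b_ge by auto
    show "0 \<le> g \<xi>" unfolding g_def using p_nonneg x0 by (auto intro!: sum_nonneg)
    show "g \<xi> \<le> h \<xi>" unfolding g_def h_def
    proof (rule sum_mono)
      fix k assume k: "k \<in> {1..m}"
      show "p k \<xi> * exp (integral {tau k \<xi>..\<xi>} (\<lambda>u. \<Sum>l\<in>{1..m}. p l u)) \<le> p k \<xi> * w k \<xi>"
        using inner[OF that k] p_nonneg k x0 by (auto intro: mult_left_mono)
    qed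
  qed
  have GB: "exp (G i s t) \<le> x (tau i s) / x (tau i t)"
    if "i \<in> {1..m}" "lev T3 \<le> s" "s \<le> t" for i s t
  proof -
    have "exp (G i s t) \<le> x (tau i s) / x (tau i t)" unfolding G_def
      by (rule G_bound'[of T3 i s t g]) (use that b_ge gle in auto)
    then show ?thesis .
  qed
  have "\<forall>t\<ge>lev (lev T3). A1 m p tau t < 1 / real m ^ m"
  proof (intro allI impI)
    fix t assume "t \<ge> lev (lev T3)"
    from main[OF T GB this] show "A1 m p tau t < 1 / real m ^ m"
      unfolding A1_def G_def g_def by simp
  qed
  then show "eventually (\<lambda>t. ereal (A1 m p tau t) \<le> ereal (1 / real m ^ m)) at_top"
    unfolding eventually_at_top_linorder by (meson less_imp_le ereal_less_eq(3))
qed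

lemma h_ge_term: "s \<ge> Tb \<Longrightarrow> i \<in> {1..m} \<Longrightarrow> p i s * w i s \<le> h s"
  unfolding h_def
proof (rule member_le_sum)
  fix l assume s: "s \<ge> Tb" and "l \<in> {1..m} - {i}"
  then have l: "l \<in> {1..m}" by auto
  have "p l s \<ge> 0" using p_nonneg l pos_Tb(3)[OF s] by auto
  moreover have "w l s > 0" using w_pos[OF s l] .
  ultimately show "0 \<le> p l s * w l s" by simp
qed auto

lemma good_step:
  assumes i: "i \<in> {1..m}"
    and beta: "ereal \<beta> \<le> Liminf at_top (\<lambda>t. ereal (integral {tau i t..t} (p i)))" "0 < \<beta>"
    and good: "\<forall>c'<c. eventually (\<lambda>t. c' \<le> w i t) at_top" and c1: "c \<ge> 1"
  shows "\<forall>c'<exp (\<beta> * c). eventually (\<lambda>t. c' \<le> w i t) at_top"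
proof (intro allI impI)
  fix c' assume c': "c' < exp (\<beta> * c)"
  have "((\<lambda>d. exp ((c - d) * (\<beta> - d))) \<longlongrightarrow> exp ((c - 0) * (\<beta> - 0))) (at_right 0)"
    by (intro tendsto_intros)
  then have "eventually (\<lambda>d. c' < exp ((c - d) * (\<beta> - d))) (at_right 0)"
    using c' by (intro order_tendstoD(1)) (simp_all add: mult.commute)
  then obtain b0 where b0: "b0 > 0" "\<And>d. d > 0 \<Longrightarrow> d < b0 \<Longrightarrow> c' < exp ((c - d) * (\<beta> - d))"
    unfolding eventually_at_right_field by blast
  define d where "d = min (b0 / 2) (min (c / 2) (\<beta> / 2))"
  have d: "0 < d" "d < b0" "d < c" "d < \<beta>" using b0 c1 beta(2) unfolding d_def by linarith+
  have dc: "c' < exp ((c - d) * (\<beta> - d))" using b0(2) d by auto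
  have "c - d < c" using d by simp
  then have "eventually (\<lambda>t. c - d \<le> w i t) at_top" using good by simp
  then obtain Ta where Ta: "\<And>t. t \<ge> Ta \<Longrightarrow> c - d \<le> w i t" by (auto simp: eventually_at_top_linorder)
  have "ereal (\<beta> - d) < ereal \<beta>" using d by simp
  then have "eventually (\<lambda>t. ereal (\<beta> - d) < ereal (integral {tau i t..t} (p i))) at_top"
    by (rule le_Liminf_iff[THEN iffD1, OF beta(1), rule_format])
  moreover have "eventually (\<lambda>t. t \<ge> lev (max Ta T2)) at_top" by simp
  ultimately show "eventually (\<lambda>t. c' \<le> w i t) at_top"
  proof eventually_elim
    case (elim t)
    have tl: "tau i t \<ge> max Ta T2" using lev(2)[OF elim(2) i] .
    have t2: "t \<ge> T2" using elim(2) lev(1)[of "max Ta T2"] by auto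
    have tt: "tau i t \<le> t" using pos_Tb(6)[of t i] t2 b_ge i by auto
    have I: "integral {tau i t..t} (p i) > \<beta> - d" using elim(1) by simp
    have "integral {tau i t..t} (\<lambda>s. (c - d) * p i s) \<le> ln (w i t)"
    proof (rule int_le_nonneg[OF ln_w[OF t2 i]])
      fix s assume s: "s \<in> {tau i t..t}"
      then have sT: "s \<ge> Ta" "s \<ge> T2" using tl by auto
      then have s0: "s \<ge> t0" "s \<ge> Tb" using b_ge by auto
      have pp: "p i s \<ge> 0" using p_nonneg i s0 by auto
      show "0 \<le> (c - d) * p i s" using d pp by simp
      have "(c - d) * p i s \<le> w i s * p i s" using Ta[OF sT(1)] pp by (rule mult_right_mono)
      also have "\<dots> \<le> h s" using h_ge_term[OF s0(2) i] by (simp add: mult.commute)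
      finally show "(c - d) * p i s \<le> h s" .
    qed
    then have "(c - d) * integral {tau i t..t} (p i) \<le> ln (w i t)" using integral_mult_right[of "{tau i t..t}" "c - d" "p i"] by metis
    moreover have "(c - d) * (\<beta> - d) \<le> (c - d) * integral {tau i t..t} (p i)"
      using I d by (intro mult_left_mono) linarith+
    ultimately have "(c - d) * (\<beta> - d) \<le> ln (w i t)" by linarith
    moreover have "w i t > 0" using w_pos[of t i] t2 b_ge i by auto
    ultimately have "exp ((c - d) * (\<beta> - d)) \<le> w i t"
      by (metis exp_le_cancel_iff exp_ln)
    then show ?case using dc by simp
  qed
qed

lemma lam_good:
  assumes i: "i \<in> {1..m}"
    and beta: "ereal \<beta> \<le> Liminf at_top (\<lambda>t. ereal (integral {tau i t..t} (p i)))" "0 < \<beta>"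
    and fixp: "exp (\<beta> * lam) = lam" and minl: "\<forall>l. exp (\<beta> * l) = l \<longrightarrow> lam \<le> l"
  shows "\<forall>\<epsilon>>0. eventually (\<lambda>t. lam - \<epsilon> \<le> w i t) at_top"
proof -
  define good where "good c \<longleftrightarrow> (\<forall>c'<c. eventually (\<lambda>t. c' \<le> w i t) at_top)" for c
  have g1: "good 1" unfolding good_def
  proof (intro allI impI)
    fix c' :: real assume "c' < 1"
    then have "\<forall>t\<ge>T2. c' \<le> w i t" using w_ge1 i by force
    then show "eventually (\<lambda>t. c' \<le> w i t) at_top" unfolding eventually_at_top_linorder by blast
  qed
  have "lam > 0" using fixp by (metis exp_gt_zero)
  then have lam1: "lam \<ge> 1" using fixp beta(2) by (metis less_eq_real_def one_less_exp_iff zero_less_mult_iff)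
  define S where "S = {c. 1 \<le> c \<and> c \<le> lam \<and> good c}"
  have S1: "1 \<in> S" using g1 lam1 by (simp add: S_def)
  have bdd: "bdd_above S" unfolding S_def bdd_above_def by auto
  define cs where "cs = Sup S"
  have cs1: "1 \<le> cs" unfolding cs_def using cSup_upper[OF S1 bdd] .
  have cslam: "cs \<le> lam" unfolding cs_def using S1 by (intro cSup_least) (auto simp: S_def)
  have gcs: "good cs" unfolding good_def
  proof (intro allI impI)
    fix c' assume "c' < cs"
    then obtain c where c: "c \<in> S" "c' < c" using less_cSup_iff[of S c'] S1 bdd unfolding cs_def by blast
    then have "good c" by (simp add: S_def)
    then show "eventually (\<lambda>t. c' \<le> w i t) at_top" using c(2) unfolding good_def by blast
  qed
  have gexp: "good (exp (\<beta> * cs))" unfolding good_def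
    by (rule good_step[OF i beta gcs[unfolded good_def] cs1])
  have "exp (\<beta> * cs) \<le> exp (\<beta> * lam)" using cslam beta(2) by simp
  then have e1: "exp (\<beta> * cs) \<le> lam" using fixp by simp
  have e2: "1 \<le> exp (\<beta> * cs)" using cs1 beta(2) by simp
  have "exp (\<beta> * cs) \<in> S" using gexp e1 e2 by (simp add: S_def)
  then have ecs: "exp (\<beta> * cs) \<le> cs" unfolding cs_def using bdd by (rule cSup_upper)
  have "lam \<le> cs"
  proof -
    have "\<exists>y. 0 \<le> y \<and> y \<le> cs \<and> exp (\<beta> * y) - y = 0"
      by (rule IVT2) (use ecs cs1 in \<open>auto intro!: continuous_intros\<close>)
    then obtain y where "0 \<le> y" "y \<le> cs" "exp (\<beta> * y) = y" by auto
    then show ?thesis using minl by force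
  qed
  show ?thesis
  proof (intro allI impI)
    fix \<epsilon> :: real assume "\<epsilon> > 0"
    then have "lam - \<epsilon> < cs" using \<open>lam \<le> cs\<close> by simp
    then show "eventually (\<lambda>t. lam - \<epsilon> \<le> w i t) at_top" using gcs unfolding good_def by simp
  qed
qed

lemma cond2:
  assumes hyp: "\<forall>i\<in>{1..m}.
               Liminf at_top (\<lambda>t. ereal (integral {tau i t..t} (p i))) = ereal (\<beta> i)
               \<and> 0 < \<beta> i \<and> \<beta> i \<le> exp (-1)
               \<and> exp (\<beta> i * lam i) = lam i
               \<and> (\<forall>l. exp (\<beta> i * l) = l \<longrightarrow> lam i \<le> l)"
  shows "Limsup (at_right 0) (\<lambda>\<epsilon>. Limsup at_top (\<lambda>t. ereal (A2 m p tau lam \<epsilon> t)))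
              \<le> ereal (1 / real m ^ m)"
proof (rule Limsup_bounded)
  have "Limsup at_top (\<lambda>t. ereal (A2 m p tau lam \<epsilon> t)) \<le> ereal (1 / real m ^ m)" if e: "\<epsilon> > 0" for \<epsilon> :: real
  proof (rule Limsup_bounded)
    have "\<forall>k\<in>{1..m}. eventually (\<lambda>t. lam k - \<epsilon> \<le> w k t) at_top"
    proof
      fix k assume k: "k \<in> {1..m}"
      then have "ereal (\<beta> k) \<le> Liminf at_top (\<lambda>t. ereal (integral {tau k t..t} (p k)))" "0 < \<beta> k"
        "exp (\<beta> k * lam k) = lam k" "\<forall>l. exp (\<beta> k * l) = l \<longrightarrow> lam k \<le> l" using hyp by auto
      from lam_good[OF k this] e show "eventually (\<lambda>t. lam k - \<epsilon> \<le> w k t) at_top" by blast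
    qed
    then have "eventually (\<lambda>t. \<forall>k\<in>{1..m}. lam k - \<epsilon> \<le> w k t) at_top"
      by (intro eventually_ball_finite) auto
    then obtain Te where Te: "\<And>t k. t \<ge> Te \<Longrightarrow> k \<in> {1..m} \<Longrightarrow> lam k - \<epsilon> \<le> w k t"
      unfolding eventually_at_top_linorder by blast
    define T where "T = max Te T2"
    have T: "T \<ge> T2" by (simp add: T_def)
    define g where "g \<xi> = (\<Sum>k\<in>{1..m}. (lam k - \<epsilon>) * p k \<xi>)" for \<xi>
    have gle: "g \<xi> \<le> h \<xi>" if "\<xi> \<ge> T" for \<xi>
      unfolding g_def h_def
    proof (rule sum_mono)
      fix k assume k: "k \<in> {1..m}"
      have x0: "\<xi> \<ge> t0" "\<xi> \<ge> Te" using that b_ge by (auto simp: T_def)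
      have "p k \<xi> \<ge> 0" using p_nonneg k x0 by auto
      then show "(lam k - \<epsilon>) * p k \<xi> \<le> p k \<xi> * w k \<xi>"
        using Te[OF x0(2) k] by (simp add: mult.commute mult_left_mono)
    qed
    have GB: "exp (integral {tau i s..tau i t} g) \<le> x (tau i s) / x (tau i t)"
      if "i \<in> {1..m}" "lev T \<le> s" "s \<le> t" for i s t
    proof (rule G_bound[OF T that gle])
      have "tau i s \<ge> T" using lev(2)[OF that(2) that(1)] .
      then have sub: "{tau i s..tau i t} \<subseteq> {t0..}" using T b_ge by auto
      have "continuous_on {tau i s..tau i t} g" unfolding g_def
      proof (intro continuous_on_sum continuous_on_mult continuous_on_const)
        fix k assume "k \<in> {1..m}"
        then have "continuous_on {t0..} (p k)" using p_cont by auto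
        then show "continuous_on {tau i s..tau i t} (p k)" using continuous_on_subset[OF _ sub] by blast
      qed
      then show "g integrable_on {tau i s..tau i t}" by (rule integrable_continuous_interval)
    qed
    have "\<forall>t\<ge>lev (lev T). A2 m p tau lam \<epsilon> t < 1 / real m ^ m"
    proof (intro allI impI)
      fix t assume tt: "t \<ge> lev (lev T)"
      have T': "lev T \<ge> T2" using T lev(1)[of T] by linarith
      from main[OF T' GB tt] show "A2 m p tau lam \<epsilon> t < 1 / real m ^ m"
        unfolding A2_def g_def by simp
    qed
    then show "eventually (\<lambda>t. ereal (A2 m p tau lam \<epsilon> t) \<le> ereal (1 / real m ^ m)) at_top"
      unfolding eventually_at_top_linorder by (meson less_imp_le ereal_less_eq(3))
  qed
  then show "eventually (\<lambda>\<epsilon>. Limsup at_top (\<lambda>t. ereal (A2 m p tau lam \<epsilon> t)) \<le> ereal (1 / real m ^ m)) (at_right 0)"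
    using eventually_at_right_less[of "0::real"] by (auto elim: eventually_mono)
qed

lemma no_cond:
  "\<not> (Limsup at_top (\<lambda>t. ereal (A1 m p tau t)) > ereal (1 / real m ^ m)
       \<or> (\<exists>\<beta> lam :: nat \<Rightarrow> real.
            (\<forall>i\<in>{1..m}.
               Liminf at_top (\<lambda>t. ereal (integral {tau i t..t} (p i))) = ereal (\<beta> i)
               \<and> 0 < \<beta> i \<and> \<beta> i \<le> exp (-1)
               \<and> exp (\<beta> i * lam i) = lam i
               \<and> (\<forall>l. exp (\<beta> i * l) = l \<longrightarrow> lam i \<le> l))
            \<and> Limsup (at_right 0)
                (\<lambda>\<epsilon>. Limsup at_top (\<lambda>t. ereal (A2 m p tau lam \<epsilon> t)))
              > ereal (1 / real m ^ m)))"
proof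
  assume "Limsup at_top (\<lambda>t. ereal (A1 m p tau t)) > ereal (1 / real m ^ m)
       \<or> (\<exists>\<beta> lam :: nat \<Rightarrow> real.
            (\<forall>i\<in>{1..m}.
               Liminf at_top (\<lambda>t. ereal (integral {tau i t..t} (p i))) = ereal (\<beta> i)
               \<and> 0 < \<beta> i \<and> \<beta> i \<le> exp (-1)
               \<and> exp (\<beta> i * lam i) = lam i
               \<and> (\<forall>l. exp (\<beta> i * l) = l \<longrightarrow> lam i \<le> l))
            \<and> Limsup (at_right 0)
                (\<lambda>\<epsilon>. Limsup at_top (\<lambda>t. ereal (A2 m p tau lam \<epsilon> t)))
              > ereal (1 / real m ^ m))"
  then show False
  proof
    assume "Limsup at_top (\<lambda>t. ereal (A1 m p tau t)) > ereal (1 / real m ^ m)"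
    then show False using cond1 by simp
  next
    assume "\<exists>\<beta> lam :: nat \<Rightarrow> real.
            (\<forall>i\<in>{1..m}.
               Liminf at_top (\<lambda>t. ereal (integral {tau i t..t} (p i))) = ereal (\<beta> i)
               \<and> 0 < \<beta> i \<and> \<beta> i \<le> exp (-1)
               \<and> exp (\<beta> i * lam i) = lam i
               \<and> (\<forall>l. exp (\<beta> i * l) = l \<longrightarrow> lam i \<le> l))
            \<and> Limsup (at_right 0)
                (\<lambda>\<epsilon>. Limsup at_top (\<lambda>t. ereal (A2 m p tau lam \<epsilon> t)))
              > ereal (1 / real m ^ m)"
    then obtain \<beta> lam :: "nat \<Rightarrow> real" where h1: "\<forall>i\<in>{1..m}.
               Liminf at_top (\<lambda>t. ereal (integral {tau i t..t} (p i))) = ereal (\<beta> i)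
               \<and> 0 < \<beta> i \<and> \<beta> i \<le> exp (-1)
               \<and> exp (\<beta> i * lam i) = lam i
               \<and> (\<forall>l. exp (\<beta> i * l) = l \<longrightarrow> lam i \<le> l)"
      and h2: "Limsup (at_right 0)
                (\<lambda>\<epsilon>. Limsup at_top (\<lambda>t. ereal (A2 m p tau lam \<epsilon> t)))
              > ereal (1 / real m ^ m)" by blast
    show False using cond2[OF h1] h2 by simp
  qed
qed

end

theorem theorem3p3:
  fixes m :: nat and t0 :: real and p tau :: "nat \<Rightarrow> real \<Rightarrow> real"
  assumes m: "m \<ge> 1"
    and p_cont: "\<forall>i\<in>{1..m}. continuous_on {t0..} (p i)"
    and tau_cont: "\<forall>i\<in>{1..m}. continuous_on {t0..} (tau i)"
    and p_nonneg: "\<forall>i\<in>{1..m}. \<forall>t\<ge>t0. p i t \<ge> 0"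
    and tau_nonneg: "\<forall>i\<in>{1..m}. \<forall>t\<ge>t0. tau i t \<ge> 0"
    and tau_le: "\<forall>i\<in>{1..m}. \<forall>t\<ge>t0. tau i t \<le> t"
    and tau_lim: "\<forall>i\<in>{1..m}. filterlim (tau i) at_top at_top"
    and tau_mono: "\<forall>i\<in>{1..m}. mono_on {t0..} (tau i)"
    and cond:
      "Limsup at_top (\<lambda>t. ereal (A1 m p tau t)) > ereal (1 / real m ^ m)
       \<or> (\<exists>\<beta> lam :: nat \<Rightarrow> real.
            (\<forall>i\<in>{1..m}.
               Liminf at_top (\<lambda>t. ereal (integral {tau i t..t} (p i))) = ereal (\<beta> i)
               \<and> 0 < \<beta> i \<and> \<beta> i \<le> exp (-1)
               \<and> exp (\<beta> i * lam i) = lam i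
               \<and> (\<forall>l. exp (\<beta> i * l) = l \<longrightarrow> lam i \<le> l))
            \<and> Limsup (at_right 0)
                (\<lambda>\<epsilon>. Limsup at_top (\<lambda>t. ereal (A2 m p tau lam \<epsilon> t)))
              > ereal (1 / real m ^ m))"
  shows "\<forall>x. is_solution m p tau t0 x \<longrightarrow> oscillatory x"
proof (intro allI impI)
  fix x assume sol: "is_solution m p tau t0 x"
  show "oscillatory x"
  proof (rule ccontr)
    assume "\<not> oscillatory x"
    then obtain T where T: "\<And>t. t \<ge> T \<Longrightarrow> x t \<noteq> 0" unfolding oscillatory_def by auto
    from sol obtain T0 dx where
      dx: "\<forall>t\<ge>tau_inv m tau t0 T0. (x has_real_derivative dx t) (at t within {tau_inv m tau t0 T0..}) \<and>
              dx t + (\<Sum>i\<in>{1..m}. p i t * x (tau i t)) = 0"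
      unfolding is_solution_def by blast
    define a where "a = tau_inv m tau t0 T0"
    have deriv: "\<forall>t\<ge>a. (x has_real_derivative dx t) (at t within {a..})"
      and eqn: "\<forall>t\<ge>a. dx t + (\<Sum>i\<in>{1..m}. p i t * x (tau i t)) = 0" using dx by (auto simp: a_def)
    have xc: "continuous_on {a..} x"
      using deriv by (auto simp: continuous_on_eq_continuous_within intro: DERIV_continuous)
    define Tp where "Tp = max T a"
    have sgn: "\<forall>t\<ge>Tp. x t > 0" if xp: "x Tp > 0"
    proof (rule ccontr)
      assume "\<not> (\<forall>t\<ge>Tp. x t > 0)"
      then obtain t where t: "t \<ge> Tp" "x t \<le> 0" by auto
      have "continuous_on {Tp..t} x" using continuous_on_subset[OF xc] by (auto simp: Tp_def)
      then obtain y where "Tp \<le> y" "y \<le> t" "x y = 0" using IVT2'[of x t 0 Tp] t xp by auto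
      then show False using T[of y] by (auto simp: Tp_def)
    qed
    have sgn': "\<forall>t\<ge>Tp. x t < 0" if xp: "x Tp < 0"
    proof (rule ccontr)
      assume "\<not> (\<forall>t\<ge>Tp. x t < 0)"
      then obtain t where t: "t \<ge> Tp" "x t \<ge> 0" by auto
      have "continuous_on {Tp..t} x" using continuous_on_subset[OF xc] by (auto simp: Tp_def)
      then obtain y where "Tp \<le> y" "y \<le> t" "x y = 0" using IVT'[of x Tp 0 t] t xp by auto
      then show False using T[of y] by (auto simp: Tp_def)
    qed
    have "x Tp \<noteq> 0" using T by (simp add: Tp_def)
    then consider "x Tp > 0" | "x Tp < 0" by linarith
    then show False
    proof cases
      case 1
      interpret possol m t0 a Tp p tau x dx
        by (rule possol.intro[OF m p_cont tau_cont p_nonneg tau_le tau_lim tau_mono deriv eqn sgn[OF 1]])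
      show False by (rule notE[OF no_cond cond])
    next
      case 2
      have deriv': "\<forall>t\<ge>a. ((\<lambda>t. - x t) has_real_derivative - dx t) (at t within {a..})"
        using deriv by (auto intro: DERIV_minus)
      have eqn': "\<forall>t\<ge>a. - dx t + (\<Sum>i\<in>{1..m}. p i t * - x (tau i t)) = 0"
        using eqn by (auto simp: sum_negf)
      interpret possol m t0 a Tp p tau "\<lambda>t. - x t" "\<lambda>t. - dx t"
        by (rule possol.intro[OF m p_cont tau_cont p_nonneg tau_le tau_lim tau_mono deriv' eqn']) (use sgn'[OF 2] in auto)
      show False by (rule notE[OF no_cond cond])
    qed
  qed
qed

end
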